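(* For even integers $k\ge 2$ define $$c_k = \frac{k}{2(k/2+1)(k/2-1)} + (-1)^{k/2}\frac{(k/2)!\,(k/2-2)!}{2(k-1)!}, \qquad d_k = \frac{(-1)^{k/2}(k-1)!}{2^{k+1}}$$ (with $c_k$ considered for $k\ge 4$). Then for every even $k\geq 4$ and every odd positive integer $j\leq k/2-2$: $$\nu_2\!\left(\frac{d_{k-2}}{2c_kd_k}\right)\geq 1,\qquad \nu_2\!\left(\frac{k\,d_{k/2}^2}{2c_kd_k}\right)\geq 0,$$ $$\nu_2\!\left(\left(\binom{k/2}{j}+\binom{k/2-2}{j}\right)\frac{d_{j+1}d_{k-j-1}}{c_kd_k}\right)\geq 0.$$
   Context: For a prime $p$ and nonzero rational $x=a/b$, $\nu_p(x)=\nu_p(a)-\nu_p(b)$ where $\nu_p(m)$ is the exponent of the highest power of $p$ dividing the integer $m$; $\nu_p(0)=\infty$. *)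

theory Defs
  imports Complex_Main "HOL-Library.Extended_Real" "HOL-Computational_Algebra.Primes"
begin

definition nu :: "int \<Rightarrow> rat \<Rightarrow> ereal" where
  "nu p x = (if x = 0 then \<infinity> else
     ereal (real_of_int (int (multiplicity p (fst (quotient_of x)))
                        - int (multiplicity p (snd (quotient_of x))))))"

definition c_seq :: "nat \<Rightarrow> rat" where
  "c_seq k = of_nat k / (2 * (of_nat (k div 2) + 1) * (of_nat (k div 2) - 1))
     + (-1) ^ (k div 2) * (fact (k div 2) * fact (k div 2 - 2)) / (2 * fact (k - 1))"

definition d_seq :: "nat \<Rightarrow> rat" where
  "d_seq k = (-1) ^ (k div 2) * fact (k - 1) / 2 ^ (k + 1)"

end

theory Submission
  imports Defs
begin


definition vq :: "rat \<Rightarrow> int" where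
  "vq x = int (multiplicity (2::int) (fst (quotient_of x))) - int (multiplicity (2::int) (snd (quotient_of x)))"

abbreviation vi :: "int \<Rightarrow> int" where "vi a \<equiv> int (multiplicity (2::int) a)"

lemma nu_vq: "x \<noteq> 0 \<Longrightarrow> nu 2 x = ereal (of_int (vq x))"
  unfolding nu_def vq_def by simp

lemma p2: "prime_elem (2::int)" by simp

lemma vi_mult: "a \<noteq> 0 \<Longrightarrow> b \<noteq> 0 \<Longrightarrow> vi (a * b) = vi a + vi b"
  by (simp add: prime_elem_multiplicity_mult_distrib)

lemma vi_uminus[simp]: "vi (- a) = vi a"
  using multiplicity_times_unit_right[of "-1::int" 2 a] by simp

lemma vq_frac:
  assumes a: "a \<noteq> 0" and b: "b \<noteq> 0"
  shows "vq (of_int a / of_int b) = vi a - vi b"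
proof -
  obtain p q where pq: "quotient_of (of_int a / of_int b) = (p, q)" by (cases "quotient_of (of_int a / of_int b)")
  have q: "q > 0" using quotient_of_denom_pos[OF pq] .
  have e: "(of_int a / of_int b :: rat) = of_int p / of_int q" using quotient_of_div[OF pq] .
  hence "of_int a * of_int q = (of_int p * of_int b :: rat)" using b q by (simp add: field_simps)
  hence e2: "a * q = p * b" by (metis of_int_eq_iff of_int_mult)
  have p: "p \<noteq> 0" using e2 a q by auto
  have "vi (a*q) = vi (p*b)" using e2 by simp
  hence "vi a + vi q = vi p + vi b" using a b p q by (simp add: vi_mult)
  thus ?thesis unfolding vq_def pq by simp
qed

lemma vq_int: "a \<noteq> 0 \<Longrightarrow> vq (of_int a) = vi a"
  using vq_frac[of a 1] by simp

lemma rat_repr: fixes x :: rat obtains a b where "x = of_int a / of_int b" "b \<noteq> 0" "x \<noteq> 0 \<Longrightarrow> a \<noteq> 0"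
proof -
  obtain p q where pq: "quotient_of x = (p, q)" by (cases "quotient_of x")
  show ?thesis using that[of p q] quotient_of_div[OF pq] quotient_of_denom_pos[OF pq] by auto
qed

lemma vq_mult: assumes "x \<noteq> 0" "y \<noteq> 0" shows "vq (x * y) = vq x + vq y"
proof -
  obtain a b where x: "x = of_int a / of_int b" "b \<noteq> 0" "a \<noteq> 0" using rat_repr assms(1) by metis
  obtain c d where y: "y = of_int c / of_int d" "d \<noteq> 0" "c \<noteq> 0" using rat_repr assms(2) by metis
  have "x * y = of_int (a*c) / of_int (b*d)" using x y by simp
  hence "vq (x*y) = vq (of_int (a*c) / of_int (b*d))" by simp
  hence "vq (x*y) = vi (a*c) - vi (b*d)" using x y vq_frac[of "a*c" "b*d"] by simp
  thus ?thesis using x y by (simp add: vq_frac vi_mult)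
qed

lemma vq_inverse: assumes "x \<noteq> 0" shows "vq (inverse x) = - vq x"
proof -
  obtain a b where x: "x = of_int a / of_int b" "b \<noteq> 0" "a \<noteq> 0" using rat_repr assms(1) by metis
  have "inverse x = of_int b / of_int a" using x by simp
  hence "vq (inverse x) = vq (of_int b / of_int a)" by simp
  hence "vq (inverse x) = vi b - vi a" using x by (simp add: vq_frac)
  thus ?thesis using x by (simp add: vq_frac)
qed

lemma vq_divide: assumes "x \<noteq> 0" "y \<noteq> 0" shows "vq (x / y) = vq x - vq y"
  using assms by (simp add: divide_inverse vq_mult vq_inverse)

lemma vq_minus: "vq (- x) = vq x"
proof (cases "x = 0")
  case False
  have "vq (-x) = vq (of_int (-1) * x)" by simp
  also have "\<dots> = vq (of_int (-1)) + vq x" using False by (intro vq_mult) auto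
  also have "vq (of_int (-1)) = 0" by (subst vq_int) (auto simp: multiplicity_eq_zero_iff)
  finally show ?thesis by simp
qed simp

lemma vq_neg1pow: "vq ((-1)^n * x) = vq x"
  by (cases "even n") (auto simp: vq_minus)

lemma vq_nat: "n \<noteq> 0 \<Longrightarrow> vq (of_nat n) = vi (int n)"
  using vq_int[of "int n"] by simp

lemma vq_pow2: "vq (2 ^ e) = int e"
proof -
  have "vq (2^e) = vq (of_int (2^e))" by simp
  also have "\<dots> = int e" by (subst vq_int) (auto simp: multiplicity_same_power)
  finally show ?thesis .
qed

lemma vq_add_lt: assumes "x \<noteq> 0" "y \<noteq> 0" "vq x < vq y" shows "x + y \<noteq> 0 \<and> vq (x + y) = vq x"
proof -
  obtain a b where x: "x = of_int a / of_int b" "b \<noteq> 0" "a \<noteq> 0" using rat_repr assms(1) by metis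
  obtain c d where y: "y = of_int c / of_int d" "d \<noteq> 0" "c \<noteq> 0" using rat_repr assms(2) by metis
  have s: "x + y = of_int (a*d + c*b) / of_int (b*d)" using x y by (simp add: field_simps)
  have "vi a - vi b < vi c - vi d" using assms(3) x y by (simp add: vq_frac)
  hence lt: "vi (a*d) < vi (c*b)" using x y by (simp add: vi_mult)
  have m: "multiplicity 2 (a*d + c*b) = multiplicity 2 (a*d)"
    by (rule multiplicity_sum_lt) (use lt x y in auto)
  have nz: "a*d + c*b \<noteq> 0"
  proof
    assume "a*d + c*b = 0" hence "c*b = -(a*d)" by simp
    hence "vi (c*b) = vi (a*d)" by (metis vi_uminus) 
    with lt show False by simp
  qed
  have "vq (x+y) = vq (of_int (a*d + c*b) / of_int (b*d))" using s by simp
  hence "vq (x+y) = vi (a*d + c*b) - vi (b*d)" using nz x y vq_frac[of "a*d + c*b" "b*d"] by simp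
  moreover have "x + y \<noteq> 0" unfolding s using nz x y by (simp only: divide_eq_0_iff of_int_eq_0_iff mult_eq_0_iff) simp
  ultimately show ?thesis using nz m x y by (simp add: vq_frac vi_mult)
qed



abbreviation vn :: "nat \<Rightarrow> int" where "vn n \<equiv> vi (int n)"
definition FF :: "nat \<Rightarrow> int" where "FF n = vi (fact n)"

lemma vq_fact: "vq (fact n) = FF n"
proof -
  have "vq (fact n) = vq (of_int (fact n))" by (simp add: of_int_fact)
  also have "\<dots> = FF n" unfolding FF_def by (rule vq_int) simp
  finally show ?thesis .
qed

lemma FF_Suc: "FF (Suc n) = FF n + vn (Suc n)"
proof -
  have "FF (Suc n) = vi (int (Suc n) * fact n)" unfolding FF_def by (simp only: fact_Suc)
  also have "\<dots> = vn (Suc n) + FF n" unfolding FF_def by (subst vi_mult) auto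
  finally show ?thesis by simp
qed

lemma FF_0[simp]: "FF 0 = 0" unfolding FF_def by simp

lemma vn_odd: "vn (2*n+1) = 0"
proof -
  have "\<not> (2::int) dvd int (2*n+1)" by presburger
  thus ?thesis by (simp add: not_dvd_imp_multiplicity_0)
qed

lemma vn_double: "n > 0 \<Longrightarrow> vn (2*n) = 1 + vn n"
proof -
  assume "n > 0"
  have "vn (2*n) = vi (2 * int n)" by (simp only: of_nat_mult of_nat_numeral)
  also have "\<dots> = vi 2 + vn n" using \<open>n>0\<close> by (subst vi_mult) auto
  also have "vi 2 = 1" using multiplicity_self[of "2::int"] by simp
  finally show ?thesis .
qed

lemma FF_double: "FF (2*n) = int n + FF n"
proof (induction n)
  case (Suc n)
  have "FF (2 * Suc n) = FF (Suc (Suc (2*n)))" by simp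
  also have "\<dots> = FF (2*n) + vn (2*n+1) + vn (2*(Suc n))" by (simp add: FF_Suc)
  also have "\<dots> = FF (2*n) + 1 + vn (Suc n)" using vn_odd[of n] vn_double[of "Suc n"] by linarith
  finally show ?case using Suc FF_Suc[of n] by simp
qed simp

lemma FF_odd: "FF (2*n+1) = int n + FF n"
  using FF_Suc[of "2*n"] FF_double[of n] vn_odd[of n] by simp

lemma FF_le: "FF n \<le> int n \<and> (n > 0 \<longrightarrow> FF n < int n)"
proof (induction n rule: less_induct)
  case (less n)
  show ?case
  proof (cases "even n")
    case True
    then obtain q where q: "n = 2*q" by blast
    show ?thesis
    proof (cases "q = 0")
      case False
      hence "q < n" using q by simp
      have "FF q < int q" using less[of q] \<open>q<n\<close> False by blast
      thus ?thesis using q FF_double[of q] False by simp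
    qed (simp add: q)
  next
    case False
    then obtain q where q: "n = 2*q+1" using oddE by blast
    hence "q < n" by simp
    have "FF q \<le> int q" using less[of q] \<open>q<n\<close> by blast
    thus ?thesis using q FF_odd[of q] by simp
  qed
qed

lemma FF_binom: assumes "b \<le> a" shows "vn (a choose b) = FF a - FF b - FF (a - b)"
proof -
  have "(fact b * fact (a-b) * (a choose b) :: nat) = fact a" using binomial_fact_lemma[OF assms] .
  hence "int (fact b * fact (a-b) * (a choose b)) = int (fact a)" by (rule arg_cong)
  hence "(fact b * fact (a-b) * int (a choose b) :: int) = fact a" by (simp only: of_nat_fact of_nat_mult)
  hence "FF a = vi (fact b * fact (a-b) * int (a choose b))" unfolding FF_def by simp
  also have "\<dots> = FF b + FF (a-b) + vn (a choose b)" unfolding FF_def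
    using assms by (simp add: vi_mult)
  finally show ?thesis by simp
qed

lemma FF_sup: "FF a + FF b \<le> FF (a + b)"
  using FF_binom[of a "a+b"] by simp

lemma FF_pow: "FF (2^e * u) = (2^e - 1) * int u + FF u"
proof (induction e)
  case (Suc e)
  have "FF (2^Suc e * u) = FF (2 * (2^e*u))" by (simp add: mult.assoc)
  also have "\<dots> = 2^e * int u + FF (2^e*u)" by (subst FF_double) simp
  finally show ?case using Suc by (simp add: algebra_simps)
qed simp

lemma vn_lt: "\<not> 2^e dvd y \<Longrightarrow> vn y < int e"
proof -
  assume "\<not> 2^e dvd y"
  moreover have "(2::int)^e = int (2^e)" by simp
  ultimately have "\<not> (2::int)^e dvd int y" by (simp only: int_dvd_int_iff) simp
  moreover have "int y \<noteq> 0" using \<open>\<not> 2^e dvd y\<close> by (metis dvd_0_right of_nat_eq_0_iff)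
  ultimately have "multiplicity 2 (int y) < e" using multiplicity_lessI[of "int y" 2 e] by simp
  thus ?thesis by simp
qed

lemma vn_ge: "2^e dvd y \<Longrightarrow> y > 0 \<Longrightarrow> vn y \<ge> int e"
proof -
  assume "2^e dvd y" "y > 0"
  moreover have "(2::int)^e = int (2^e)" by simp
  ultimately have "(2::int)^e dvd int y" by (simp only: int_dvd_int_iff)
  hence "multiplicity 2 (int y) \<ge> e" using multiplicity_geI[of "int y" 2 e] \<open>y>0\<close> by simp
  thus ?thesis by simp
qed

lemma vn_pos: "vn n \<ge> 0" by simp

lemma vq_of_nat: "n > 0 \<Longrightarrow> vq (of_nat n) = vn n"
  using vq_nat by simp



lemma binom_step: assumes "r < M" shows "Suc r * (M choose Suc r) = (M - r) * (M choose r)"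
proof -
  obtain M' where M: "M = Suc M'" using assms by (cases M) auto
  have "Suc M' * (M' choose r) = (Suc M' choose Suc r) * Suc r" by (rule Suc_times_binomial_eq)
  moreover have "(M - r) * (M choose r) = M * ((M - 1) choose r)" by (rule binomial_absorb_comp)
  ultimately show ?thesis using M by (simp add: mult.commute)
qed

lemma binom_pow2_mod4:
  assumes "1 \<le> a"
  shows "r < 2^(a-1) \<Longrightarrow> (4::int) dvd (int ((2^a - 1) choose r) - (-1)^r)"
proof (induction r)
  case 0 then show ?case by simp
next
  case (Suc r)
  define M :: nat where "M = 2^a - 1"
  define P where "P = int (M choose r)"
  define P' where "P' = int (M choose Suc r)"
  have ih: "4 dvd (P - (-1)^r)" using Suc unfolding P_def M_def by simp
  have pa: "(2::nat)^a = 2 * 2^(a-1)" using assms by (metis Suc_diff_le diff_Suc_1 power_Suc)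
  have rM: "r < M" using Suc.prems pa unfolding M_def by simp
  have e1: "Suc r * (M choose Suc r) = (M - r) * (M choose r)" using binom_step[OF rM] .
  define f where "f = multiplicity (2::nat) (Suc r)"
  define u where "u = Suc r div 2^f"
  have uf1: "Suc r = 2^f * u" unfolding u_def f_def using multiplicity_dvd[of "2::nat" "Suc r"] by simp
  have uf2: "\<not> 2 dvd u" unfolding u_def f_def using multiplicity_decompose[of "Suc r" "2::nat"] by simp
  note uf = uf1 uf2
  have u0: "u > 0" using uf by (cases u) auto
  have "2^f \<le> Suc r" using uf u0 by (metis dvd_imp_le dvd_triv_left zero_less_Suc)
  hence "(2::nat)^f < 2^(a-1)" using Suc.prems by linarith
  hence fa: "f < a - 1" using power_less_imp_less_exp by (metis one_less_numeral_iff semiring_norm(76))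
  define g where "g = a - f - 2"
  have g: "a = f + 2 + g" using fa unfolding g_def by simp
  have "int (Suc r * (M choose Suc r)) = int ((M - r) * (M choose r))" using e1 by (rule arg_cong)
  hence e2: "int (Suc r) * P' = int (M - r) * P" unfolding P_def P'_def by (simp only: of_nat_mult)
  have e3: "int (M - r) = 2^a - int (Suc r)" using rM unfolding M_def by (simp add: of_nat_diff)
  have e4: "int (Suc r) = 2^f * int u" using uf by simp
  have "2^f * int u * P' = (2^a - 2^f * int u) * P" using e2 unfolding e3 e4 .
  hence "2^f * (int u * P') = 2^f * ((2^(a-f) - int u) * P)" 
    using g by (simp add: algebra_simps power_add)
  hence "int u * P' = (2^(a-f) - int u) * P" by simp
  hence "int u * (P' + P) = 2^(a-f) * P" by (simp add: algebra_simps)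
  moreover have "(2::int)^(a-f) = 4 * 2^g" using g by (simp add: power_add)
  ultimately have "4 dvd (int u * (P' + P))" by simp
  moreover have "coprime (4::int) (int u)"
  proof -
    have "odd (int u)" using uf by simp
    hence "coprime (2::int) (int u)" by simp
    hence c2: "coprime ((2::int)^2) (int u)" by (simp only: coprime_power_left_iff) blast
    have four: "(4::int) = 2^2" by simp
    show ?thesis by (subst four) (rule c2)
  qed
  ultimately have "4 dvd (P' + P)" using coprime_dvd_mult_right_iff by blast
  hence "4 dvd ((P' + P) - (P - (-1)^r))" using ih by (rule dvd_diff)
  thus ?case unfolding P'_def M_def by simp
qed



lemma FF_pred: "n \<ge> 1 \<Longrightarrow> FF n = FF (n-1) + vn n"
  using FF_Suc[of "n-1"] by simp

lemma vn_oddI: "odd n \<Longrightarrow> vn n = 0"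
  using vn_odd by (metis oddE)

lemma vn_evenI: "even n \<Longrightarrow> n > 0 \<Longrightarrow> vn n = 1 + vn (n div 2)"
  using vn_double[of "n div 2"] by (elim evenE) simp

lemma binom_fact_ident:
  "fact (q+2) * fact q * (q+3) * (q+1) * ((2*q+5) choose (q+2)) = 2 * (2*q+5) * (fact (2*q+3) :: nat)"
proof -
  have b: "fact (q+2) * fact (q+3) * ((2*q+5) choose (q+2)) = (fact (2*q+5) :: nat)"
  proof -
    have eq: "2*q+5-(q+2) = q+3" by simp
    have le: "q+2 \<le> 2*q+5" by simp
    from binomial_fact_lemma[OF le] show ?thesis by (simp only: eq)
  qed
  have f3: "fact (q+3) = (q+3) * (q+2) * (q+1) * (fact q :: nat)"
  proof -
    have "q+3 = Suc (Suc (Suc q))" by simp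
    hence "fact (q+3) = (fact (Suc (Suc (Suc q))) :: nat)" by (rule arg_cong)
    also have "\<dots> = Suc (Suc (Suc q)) * (Suc (Suc q) * (Suc q * fact q))" by (simp only: fact_Suc of_nat_id)
    finally show ?thesis by (simp add: algebra_simps)
  qed
  have f5: "fact (2*q+5) = (2*q+5) * (2*q+4) * (fact (2*q+3) :: nat)"
  proof -
    have "2*q+5 = Suc (Suc (2*q+3))" by simp
    hence "fact (2*q+5) = (fact (Suc (Suc (2*q+3))) :: nat)" by (rule arg_cong)
    also have "\<dots> = Suc (Suc (2*q+3)) * (Suc (2*q+3) * fact (2*q+3))" by (simp only: fact_Suc of_nat_id)
    finally show ?thesis by (simp add: algebra_simps)
  qed
  have "(q+2) * (fact (q+2) * fact q * (q+3) * (q+1) * ((2*q+5) choose (q+2)))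
        = fact (q+2) * fact (q+3) * ((2*q+5) choose (q+2))" unfolding f3 by (simp add: algebra_simps)
  also have "\<dots> = (q+2) * (2 * (2*q+5) * fact (2*q+3))" unfolding b f5 by (simp add: algebra_simps)
  finally have h: "(q+2) * (fact (q+2) * fact q * (q+3) * (q+1) * ((2*q+5) choose (q+2)))
        = (q+2) * (2 * (2*q+5) * (fact (2*q+3) :: nat))" .
  have "q+2 \<noteq> 0" by simp
  from mult_left_cancel[OF this] h show ?thesis by blast
qed

lemma vn_pow2: "vn (2^e) = int e"
proof -
  have "vn (2^e) = vi (2^e)" by simp
  also have "\<dots> = int e" by (simp add: multiplicity_same_power)
  finally show ?thesis .
qed

lemma alg_c:
  fixes x f1 f2 kk :: rat
  assumes "x \<ge> 0" "f2 \<noteq> 0" "kk \<noteq> 0" "f1*(x+3)*(x+1)*kk = 2*(2*x+5)*f2"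
  shows "2*(x+2)/(2*((x+2)+1)*((x+2)-1)) + (-1) * f1/(2*f2) = ((x+2)*kk - (2*x+5))/((x+3)*(x+1)*kk)"
proof -
  define D where "D = (x+3)*(x+1)"
  have D0: "D \<noteq> 0" unfolding D_def using assms(1) by (simp add: add_nonneg_eq_0_iff)
  have e1: "2*(x+2)/(2*((x+2)+1)*((x+2)-1)) = (x+2)/D"
  proof -
    have a: "(x+2)+1 = x+3" "(x+2)-1 = x+1" by simp_all
    have "2*(x+2)/(2*((x+2)+1)*((x+2)-1)) = 2*(x+2)/(2*D)" unfolding a D_def by (simp only: mult.assoc)
    also have "\<dots> = (x+2)/D" by (rule mult_divide_mult_cancel_left) simp
    finally show ?thesis .
  qed
  have e2: "f1/(2*f2) = (2*x+5)/(D*kk)"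
  proof -
    have n1: "2*f2 \<noteq> 0" "D*kk \<noteq> 0" using assms(2,3) D0 by auto
    have "f1*(D*kk) = (2*x+5)*(2*f2)" unfolding D_def using assms(4) by (simp add: ac_simps)
    thus ?thesis using frac_eq_eq[OF n1] by simp
  qed
  have "2*(x+2)/(2*((x+2)+1)*((x+2)-1)) + (-1) * f1/(2*f2) = (x+2)/D - (2*x+5)/(D*kk)"
    using e1 e2 by simp
  also have "\<dots> = ((x+2)*kk - (2*x+5))/(D*kk)" using D0 assms(3) by (simp add: field_simps)
  finally show ?thesis unfolding D_def .
qed

lemma mersenne_c:
  assumes N: "q + 3 = 2^e" and e2: "e \<ge> 2"
  shows "c_seq (2*(q+2)) \<noteq> 0 \<and> vq (c_seq (2*(q+2))) \<le> - int e"
proof -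
  define K where "K = (2*q+5) choose (q+2)"
  define g where "g = e - 2"
  have g: "e = g + 2" using e2 unfolding g_def by simp
  have N4: "q + 3 = 4 * 2^g" using N g by (simp add: power_add)
  have gen: "\<And>x::nat. x \<ge> 1 \<Longrightarrow> q+3 = 4*x \<Longrightarrow> q = 4*(x-1)+1" by presburger
  have "(2::nat)^g \<ge> 1" by simp
  from gen[OF this N4] obtain s where s: "q = 4*s + 1" by blast
  have K4: "4 dvd (int K + 1)"
  proof -
    have a: "(2::nat)^(e+1) - 1 = 2*q+5" using N by simp
    have r: "q + 2 < 2^(e+1-1)" using N by simp
    have "(4::int) dvd (int ((2^(e+1) - 1) choose (q+2)) - (-1)^(q+2))"
      using binom_pow2_mod4[of "e+1" "q+2"] r by simp
    moreover have "odd (q+2)" using s by simp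
    ultimately show ?thesis unfolding K_def a by simp
  qed
  then obtain t where t: "int K + 1 = 4 * t" by blast
  have Kpos: "K > 0" unfolding K_def by simp
  have identN: "fact (q+2) * fact q * (q+3) * (q+1) * K = 2 * (2*q+5) * (fact (2*q+3) :: nat)"
    unfolding K_def by (rule binom_fact_ident)
  have identQ: "(fact (q+2) * fact q * (of_nat q+3) * (of_nat q+1) * of_nat K :: rat) = 2 * (2 * of_nat q + 5) * fact (2*q+3)"
  proof -
    have "(of_nat (fact (q+2) * fact q * (q+3) * (q+1) * K) :: rat) = of_nat (2 * (2*q+5) * (fact (2*q+3) :: nat))"
      using identN by (rule arg_cong)
    thus ?thesis by (simp only: of_nat_mult of_nat_add of_nat_numeral of_nat_fact of_nat_1)
  qed
  define X :: int where "X = (int q + 2) * int K - (2 * int q + 5)"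
  define Y :: int where "Y = (int q + 3) * (int q + 1) * int K"
  have ceq: "c_seq (2*(q+2)) = of_int X / of_int Y"
  proof -
    have h1: "(2*(q+2)) div 2 = q+2" by simp
    have h2: "q+2-2 = q" by simp
    have h3: "2*(q+2)-1 = 2*q+3" by simp
    have "c_seq (2*(q+2)) = of_nat (2*(q+2)) / (2*(of_nat (q+2) + 1)*(of_nat (q+2) - 1))
       + (-1)^(q+2) * (fact (q+2) * fact q) / (2 * fact (2*q+3))"
      unfolding c_seq_def h1 h2 h3 ..
    also have "(-1::rat)^(q+2) = -1" using s by simp
    also have "of_nat (2*(q+2)) = (2*(of_nat q + 2) :: rat)" by simp
    also have "of_nat (q+2) = (of_nat q + 2 :: rat)" by simp
    also have "2 * (of_nat q + 2) / (2 * (of_nat q + 2 + 1) * (of_nat q + 2 - 1)) +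
       - 1 * (fact (q + 2) * fact q) / (2 * fact (2 * q + 3)) =
       ((of_nat q+2)*of_nat K - (2*of_nat q+5))/((of_nat q+3)*(of_nat q+1)*of_nat K :: rat)"
      using alg_c[of "of_nat q" "fact (2*q+3)" "of_nat K" "fact (q+2) * fact q"] identQ Kpos
      by (simp add: mult.assoc)
    also have "\<dots> = of_int X / of_int Y" unfolding X_def Y_def by simp
    finally show ?thesis .
  qed
  have Kt: "int K = 4*t - 1" using t by simp
  have Xw: "X = 4 * (4*int s*t - 3*int s + 3*t - 3) + 2" unfolding X_def Kt s by (simp add: algebra_simps)
  have X4: "\<not> 4 dvd X" unfolding Xw by presburger
  hence X0: "X \<noteq> 0" by auto
  have vX: "vi X \<le> 1"
  proof -
    have "\<not> (2::int)^2 dvd X" using X4 by simp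
    hence "multiplicity 2 X < 2" using multiplicity_lessI[of X 2 2] X0 by simp
    thus ?thesis by simp
  qed
  have Y0: "Y \<noteq> 0" unfolding Y_def using Kpos by simp
  have v3: "vi (int q + 3) = int e"
  proof -
    have "int (q + 3) = int (2^e)" using N by (rule arg_cong)
    hence "int q + 3 = int (2^e)" by simp
    thus ?thesis using vn_pow2[of e] by simp
  qed
  have v1: "vi (int q + 1) = 1"
  proof -
    have "int q + 1 = int (2*(2*s+1))" using s by simp
    thus ?thesis using vn_double[of "2*s+1"] vn_odd[of s] by simp
  qed
  have vK: "vi (int K) = 0"
  proof -
    have "odd (int K)" using Kt by presburger
    thus ?thesis by (simp add: not_dvd_imp_multiplicity_0)
  qed
  have vY: "vi Y = int e + 1" unfolding Y_def using Kpos
    by (simp add: vi_mult v3 v1 vK del: of_nat_add)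
  have "vq (c_seq (2*(q+2))) = vi X - vi Y" unfolding ceq using X0 Y0 by (rule vq_frac)
  moreover have "c_seq (2*(q+2)) \<noteq> 0" unfolding ceq using X0 Y0 by simp
  ultimately show ?thesis using vX vY by simp
qed

lemma between_notdvd: assumes "2^e < z" "z < 2*2^e" shows "\<not> 2^e dvd (z::nat)"
proof
  assume "2^e dvd z"
  then obtain r where r: "z = 2^e * r" by blast
  show False
  proof (cases "r \<le> 1")
    case True
    hence "z \<le> 2^e" using r by (cases r) auto
    thus False using assms by simp
  next
    case False
    hence "z \<ge> 2^e * 2" using r by (metis Suc_1 Suc_leI mult_le_mono2 not_le)
    thus False using assms by simp
  qed
qed

lemma vn_2mod4: "vn (4*w+2) = 1"
proof -
  have "4*w+2 = 2*(2*w+1)" by simp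
  thus ?thesis using vn_double[of "2*w+1"] vn_odd[of w] by simp
qed

lemma FF_pow2: "FF (2^e) = 2^e - 1"
  using FF_pow[of e 1] FF_Suc[of 0] by simp

lemma mersenne_H3:
  assumes N: "m + 1 = 2^e" and e2: "e \<ge> 2" and j: "odd j" "0 < j" "j \<le> m - 2"
  shows "vn ((m choose j) + ((m-2) choose j)) + FF j + FF (2*m-j-2) + 2 * int e \<ge> 2 * int m"
proof -
  define g where "g = e - 2"
  have g: "e = g + 2" using e2 unfolding g_def by simp
  have "m + 1 = 4 * 2^g" using N g by (simp add: power_add)
  hence "\<exists>w. m = 4*w+3" by presburger
  then obtain w where w: "m = 4*w+3" by blast
  have C4: "4 dvd (int ((2*m+1) choose j) + 1)"
  proof -
    have a: "(2::nat)^(e+1) - 1 = 2*m+1" using N by simp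
    have r: "j < 2^(e+1-1)" using N j by simp
    have "(4::int) dvd (int ((2^(e+1) - 1) choose j) - (-1)^j)"
      using binom_pow2_mod4[of "e+1" j] r by simp
    thus ?thesis unfolding a using j by simp
  qed
  have vC: "vn ((2*m+1) choose j) = 0"
  proof -
    have "odd (int ((2*m+1) choose j))" using C4 by presburger
    thus ?thesis by (simp add: not_dvd_imp_multiplicity_0)
  qed
  have jle: "j \<le> 2*m+1" using j by simp
  have s1: "FF j + FF (2*m+1-j) = FF (2*m+1)" using FF_binom[OF jle] vC by simp
  have Fm: "FF m = int m - int e"
  proof -
    have "FF (m+1) = FF m + vn (m+1)" using FF_Suc[of m] by simp
    moreover have "vn (m+1) = int e" using N vn_pow2 by simp
    moreover have "FF (m+1) = 2^e - 1" using N FF_pow2 by simp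
    moreover have "int (m+1) = int (2^e)" using N by (rule arg_cong)
    ultimately show ?thesis by simp
  qed
  have F2m1: "FF (2*m+1) = 2 * int m - int e" using FF_odd[of m] Fm by simp
  define x where "x = vn (2*m-1-j)"
  define y where "y = vn (2*m+1-j)"
  have s2: "FF (2*m+1-j) = FF (2*m-j-2) + x + y"
  proof -
    have a1: "FF (2*m+1-j) = FF (2*m-j) + vn (2*m+1-j)" using FF_pred[of "2*m+1-j"] j by (simp add: Suc_diff_le)
    have a2: "FF (2*m-j) = FF (2*m-j-1) + vn (2*m-j)" using FF_pred[of "2*m-j"] j by simp
    have a3: "FF (2*m-j-1) = FF (2*m-j-2) + vn (2*m-j-1)" using FF_pred[of "2*m-j-1"] j w by (simp add: diff_diff_add)
    have a4: "vn (2*m-j) = 0" using j by (intro vn_oddI) simp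
    have a5: "2*m-j-1 = 2*m-1-j" by simp
    show ?thesis using a1 a2 a3 a4 unfolding x_def y_def a5 by simp
  qed
  have need: "vn ((m choose j) + ((m-2) choose j)) + int e \<ge> x + y \<Longrightarrow> ?thesis"
    using s1 s2 F2m1 by linarith
  show ?thesis
  proof (cases "j = m - 2")
    case True
    have "2*m-1-j = 2^e" using True N w by simp
    hence xe: "x = int e" unfolding x_def using vn_pow2[of e] by simp
    have "2*m+1-j = 4*(w+1)+2" using True w by simp
    hence y1: "y = 1" unfolding y_def using vn_2mod4[of "w+1"] by simp
    have "m choose (m-2) = m choose (m - (m-2))" by (rule binomial_symmetric) simp
    moreover have "m - (m-2) = 2" using w by simp
    ultimately have "m choose j = m choose 2" using True by simp
    also have "\<dots> = (4*w+3)*(2*w+1)" unfolding choose_two w by simp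
    finally have "odd (m choose j)" by simp
    moreover have c1: "(m-2) choose j = 1" using True by simp
    ultimately have "2^1 dvd ((m choose j) + ((m-2) choose j))" by simp
    moreover have "(m choose j) + ((m-2) choose j) > 0" using c1 by simp
    ultimately have "vn ((m choose j) + ((m-2) choose j)) \<ge> int 1" by (rule vn_ge)
    thus ?thesis using need xe y1 by simp
  next
    case False
    hence j4: "j + 4 \<le> m" using j w by presburger
    define z where "z = 2*m-1-j"
    have z1: "2^e < z" "z + 2 < 2*2^e" unfolding z_def using N j4 j by simp_all
    have z2: "2*m+1-j = z + 2" unfolding z_def using j4 by simp
    have ez: "even z" unfolding z_def using j j4 by simp
    have "x + y \<le> int e"
    proof (cases "4 dvd z")
      case True
      then obtain r where "z = 4*r" by blast
      hence "y = 1" unfolding y_def z2 using vn_2mod4[of r] by simp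
      moreover have "x < int e" unfolding x_def z_def[symmetric] using between_notdvd[of e z] z1 by (intro vn_lt) simp
      ultimately show ?thesis by simp
    next
      case False
      hence "\<exists>r. z = 4*r+2" using ez by presburger
      then obtain r where "z = 4*r+2" by blast
      hence "x = 1" unfolding x_def z_def[symmetric] using vn_2mod4[of r] by simp
      moreover have "y < int e" unfolding y_def z2 using between_notdvd[of e "z+2"] z1 by (intro vn_lt) simp
      ultimately show ?thesis by simp
    qed
    thus ?thesis using need by simp
  qed
qed



lemma vq_two: "vq 2 = 1" using vq_pow2[of 1] by simp

lemma vq_d: "d_seq n \<noteq> 0 \<and> vq (d_seq n) = FF (n-1) - int (n+1)"
proof -
  have "d_seq n = ((-1)^(n div 2) * fact (n-1)) / 2^(n+1)" unfolding d_seq_def ..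
  moreover have "vq (((-1)^(n div 2) * fact (n-1)) / 2^(n+1)) = FF (n-1) - int (n+1)"
    using vq_pow2[of "n+1"] by (subst vq_divide) (auto simp: vq_neg1pow vq_fact simp del: power_Suc)
  ultimately show ?thesis by simp
qed

lemma vn_add_min: assumes "a > 0" "b > 0" shows "vn (a+b) \<ge> min (vn a) (vn b)"
proof -
  define e where "e = min (multiplicity 2 (int a)) (multiplicity (2::int) (int b))"
  have "2^e dvd int a" by (rule multiplicity_dvd') (simp add: e_def)
  moreover have "2^e dvd int b" by (rule multiplicity_dvd') (simp add: e_def)
  ultimately have "(2::int)^e dvd int (a+b)" by simp
  hence "e \<le> multiplicity 2 (int (a+b))" using multiplicity_geI[of "int (a+b)" 2 e] assms by simp
  thus ?thesis unfolding e_def by simp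
qed

lemma vq_mult3: "x \<noteq> 0 \<Longrightarrow> y \<noteq> 0 \<Longrightarrow> z \<noteq> 0 \<Longrightarrow> vq (x*y*z) = vq x + vq y + vq z"
  by (simp add: vq_mult)

lemma mersenne_detect:
  assumes m: "m \<ge> 2" "odd m" and ge: "vn (m+1) \<ge> int m - FF m"
  shows "\<exists>e. m + 1 = 2^e \<and> e \<ge> 2"
proof -
  define e where "e = multiplicity (2::nat) (m+1)"
  define u where "u = (m+1) div 2^e"
  have mu: "m+1 = 2^e * u" unfolding u_def e_def using multiplicity_dvd[of "2::nat" "m+1"] by simp
  have uo: "\<not> 2 dvd u" unfolding u_def e_def using multiplicity_decompose[of "m+1" "2::nat"] by simp
  have "vn (m+1) = vi (2^e * int u)" using mu by (metis of_nat_mult of_nat_numeral of_nat_power)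
  also have "\<dots> = vi (2^e) + vn u" using uo odd_pos[of u] by (subst vi_mult) auto
  also have "vi (2^e) = int e" by (simp add: multiplicity_same_power)
  also have "vn u = 0" using uo by (intro vn_oddI) simp
  finally have ve: "vn (m+1) = int e" by simp
  have u1: "u = 1"
  proof (rule ccontr)
    assume "u \<noteq> 1"
    then obtain p where p: "u = 2*p+1" "p \<ge> 1" using uo by (metis oddE One_nat_def add.commute
       add_0 less_one linorder_not_le mult_0_right)
    have "FF p < int p" using FF_le[of p] p by simp
    hence Fu: "FF u \<le> int u - 2" using FF_odd[of p] p by simp
    have "FF (m+1) = (2^e - 1) * int u + FF u" using mu FF_pow by simp
    also have "\<dots> \<le> (2^e - 1) * int u + int u - 2" using Fu by simp
    also have "\<dots> = int (m+1) - 2" using mu by (simp add: algebra_simps)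
    finally have "FF (m+1) \<le> int m - 1" by simp
    moreover have "FF (m+1) = FF m + vn (m+1)" using FF_Suc[of m] by simp
    ultimately show False using ge by simp
  qed
  have "e \<ge> 2"
  proof (rule ccontr)
    assume "\<not> e \<ge> 2"
    hence "(2::nat)^e \<le> 2^1" by (intro power_increasing) auto
    thus False using mu u1 m by simp
  qed
  thus ?thesis using mu u1 by auto
qed

lemma c_facts:
  assumes m2: "m \<ge> 2"
  shows "c_seq (2*m) \<noteq> 0 \<and> vq (c_seq (2*m)) \<le> - vn (m-1) - 1 \<and> vq (c_seq (2*m)) \<le> FF m - int m
    \<and> (\<forall>j. odd j \<and> 0 < j \<and> j \<le> m-2 \<longrightarrow>
        vn ((m choose j) + ((m-2) choose j)) + FF j + FF (2*m-j-2) - 1 - FF (2*m-1) - vq (c_seq (2*m)) \<ge> 0)"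
proof -
  define A :: rat where "A = of_nat (2*m) / (2 * (of_nat m + 1) * (of_nat m - 1))"
  define B :: rat where "B = (-1)^m * (fact m * fact (m-2)) / (2 * fact (2*m-1))"
  have cAB: "c_seq (2*m) = A + B" unfolding c_seq_def A_def B_def by simp
  have A2: "A = of_nat (2*m) / (2 * of_nat (m+1) * of_nat (m-1))" unfolding A_def using m2 by (simp add: of_nat_diff)
  have A0: "A \<noteq> 0" unfolding A2 using m2 by simp
  have vA: "vq A = 1 + vn m - 1 - vn (m+1) - vn (m-1)"
  proof -
    have n: "(of_nat (2*m) :: rat) \<noteq> 0" "(of_nat (m+1) :: rat) \<noteq> 0" "(of_nat (m-1) :: rat) \<noteq> 0" "(2::rat) \<noteq> 0"
      using m2 by simp_all
    have "vq A = vq (of_nat (2*m)) - vq (2 * of_nat (m+1) * of_nat (m-1))"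
      unfolding A2 by (rule vq_divide) (use n in simp_all)
    also have "vq (2 * of_nat (m+1) * of_nat (m-1)) = vq 2 + vq (of_nat (m+1)) + vq (of_nat (m-1))"
      using n by (rule_tac vq_mult3) simp_all
    also have "vq (of_nat (2*m)) = vn (2*m)" using m2 by (intro vq_of_nat) simp
    also have "vn (2*m) = 1 + vn m" using m2 by (intro vn_double) simp
    also have "vq (of_nat (m+1)) = vn (m+1)" by (intro vq_of_nat) simp
    also have "vq (of_nat (m-1)) = vn (m-1)" using m2 by (intro vq_of_nat) simp
    finally show ?thesis using vq_two by simp
  qed
  have B0: "B \<noteq> 0" unfolding B_def by simp
  have vB: "vq B = FF m + FF (m-2) - 1 - FF (2*m-1)"
  proof -
    have "vq B = vq ((-1)^m * (fact m * fact (m-2))) - (vq 2 + vq (fact (2*m-1)))"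
      unfolding B_def by (simp add: vq_divide vq_mult)
    also have "vq ((-1)^m * (fact m * fact (m-2))) = vq (fact m) + vq (fact (m-2))"
      unfolding vq_neg1pow by (simp add: vq_mult)
    finally show ?thesis using vq_two by (simp add: vq_fact)
  qed
  have f1: "FF (2*m) = int m + FF m" by (rule FF_double)
  have f2: "FF (2*m) = FF (2*m-1) + vn (2*m)" using FF_pred[of "2*m"] m2 by simp
  have f3: "vn (2*m) = 1 + vn m" using m2 by (intro vn_double) simp
  have f4: "FF m = FF (m-1) + vn m" using FF_pred[of m] m2 by simp
  have f5: "FF (m-1) = FF (m-2) + vn (m-1)"
  proof -
    have "FF (m-1) = FF (m-1-1) + vn (m-1)" by (rule FF_pred) (use m2 in simp)
    moreover have "m-1-1 = m-2" by simp
    ultimately show ?thesis by simp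
  qed
  have flt: "FF m < int m" using FF_le[of m] m2 by simp
  have H3gen: "\<And>j. odd j \<Longrightarrow> 0 < j \<Longrightarrow> j \<le> m-2 \<Longrightarrow>
      (vn ((m choose j) + ((m-2) choose j)) \<ge> FF m - FF j - FF (m-j) \<or>
       vn ((m choose j) + ((m-2) choose j)) \<ge> FF (m-2) - FF j - FF (m-2-j))
      \<and> FF (m-j-1) + FF (m-1) \<le> FF (2*m-j-2)
      \<and> FF (m-2-j) + FF m \<le> FF (2*m-j-2)
      \<and> FF (m-j) + FF (m-2) \<le> FF (2*m-j-2)
      \<and> FF (m-j) = FF (m-j-1) + vn (m-j)"
  proof -
    fix j assume j: "odd j" "0 < j" "j \<le> m-2"
    have jm: "j \<le> m" "j \<le> m-2" using j by auto
    have b1: "vn (m choose j) = FF m - FF j - FF (m-j)" using FF_binom[OF jm(1)] .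
    have b2: "vn ((m-2) choose j) = FF (m-2) - FF j - FF (m-2-j)" using FF_binom[OF jm(2)] .
    have p1: "(m choose j) > 0" "((m-2) choose j) > 0" using jm by simp_all
    have mn: "vn ((m choose j) + ((m-2) choose j)) \<ge> min (vn (m choose j)) (vn ((m-2) choose j))"
      using vn_add_min[OF p1] .
    have e1: "m-j-1 + (m-1) = 2*m-j-2" using j by simp
    have s1: "FF (m-j-1) + FF (m-1) \<le> FF (2*m-j-2)" using FF_sup[of "m-j-1" "m-1"] unfolding e1 .
    have e2: "m-2-j + m = 2*m-j-2" using j by simp
    have s2: "FF (m-2-j) + FF m \<le> FF (2*m-j-2)" using FF_sup[of "m-2-j" m] unfolding e2 .
    have e3: "m-j + (m-2) = 2*m-j-2" using j by simp
    have s3: "FF (m-j) + FF (m-2) \<le> FF (2*m-j-2)" using FF_sup[of "m-j" "m-2"] unfolding e3 .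
    have s4: "FF (m-j) = FF (m-j-1) + vn (m-j)" using FF_pred[of "m-j"] j by simp
    have mn2: "vn ((m choose j) + ((m-2) choose j)) \<ge> vn (m choose j) \<or>
               vn ((m choose j) + ((m-2) choose j)) \<ge> vn ((m-2) choose j)" using mn by linarith
    show "?thesis j" using mn2 b1 b2 s1 s2 s3 s4 by simp
  qed
  have cc: "c_seq (2*m) = B + A" using cAB by simp
  show ?thesis
  proof (cases "even m")
    case True
    have "odd (m-1)" "odd (m+1)" using True m2 by auto
    hence o1: "vn (m-1) = 0" "vn (m+1) = 0" using vn_oddI by blast+
    have vAe: "vq A = vn m" using vA o1 by simp
    have vBe: "vq B = FF m - int m" using vB f1 f2 f3 f4 f5 o1 by linarith
    have lt: "vq B < vq A" using vAe vBe flt by simp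
    from vq_add_lt[OF B0 A0 lt] have c0: "B + A \<noteq> 0" "vq (B + A) = vq B" by auto
    have H3: "\<forall>j. odd j \<and> 0 < j \<and> j \<le> m-2 \<longrightarrow>
        vn ((m choose j) + ((m-2) choose j)) + FF j + FF (2*m-j-2) - 1 - FF (2*m-1) - vq (B + A) \<ge> 0"
    proof (intro allI impI)
      fix j assume j: "odd j \<and> 0 < j \<and> j \<le> m-2"
      have h: "(vn ((m choose j) + ((m-2) choose j)) \<ge> FF m - FF j - FF (m-j) \<or>
       vn ((m choose j) + ((m-2) choose j)) \<ge> FF (m-2) - FF j - FF (m-2-j))
      \<and> FF (m-j-1) + FF (m-1) \<le> FF (2*m-j-2)
      \<and> FF (m-2-j) + FF m \<le> FF (2*m-j-2)
      \<and> FF (m-j) + FF (m-2) \<le> FF (2*m-j-2)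
      \<and> FF (m-j) = FF (m-j-1) + vn (m-j)" using H3gen j by blast
      have "odd (m-j)" using True j by presburger
      hence z: "vn (m-j) = 0" by (rule vn_oddI)
      from h have d: "vn ((m choose j) + ((m-2) choose j)) \<ge> FF m - FF j - FF (m-j) \<or>
       vn ((m choose j) + ((m-2) choose j)) \<ge> FF (m-2) - FF j - FF (m-2-j)" by blast
      from h have s1: "FF (m-j-1) + FF (m-1) \<le> FF (2*m-j-2)" and s2: "FF (m-2-j) + FF m \<le> FF (2*m-j-2)"
        and s4: "FF (m-j) = FF (m-j-1) + vn (m-j)" by blast+
      from d show "vn ((m choose j) + ((m-2) choose j)) + FF j + FF (2*m-j-2) - 1 - FF (2*m-1) - vq (B + A) \<ge> 0"
      proof
        assume a: "vn ((m choose j) + ((m-2) choose j)) \<ge> FF m - FF j - FF (m-j)"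
        show ?thesis using a s1 s4 z c0(2) vBe f1 f2 f3 f4 by linarith
      next
        assume a: "vn ((m choose j) + ((m-2) choose j)) \<ge> FF (m-2) - FF j - FF (m-2-j)"
        show ?thesis using a s2 c0(2) vBe f1 f2 f3 f4 f5 o1 by linarith
      qed
    qed
    show ?thesis unfolding cc using c0 vBe flt o1 H3 by simp
  next
    case False
    have o1: "vn m = 0" using False by (intro vn_oddI)
    have vAo: "vq A = - vn (m+1) - vn (m-1)" using vA o1 by simp
    have vBo: "vq B = FF m - vn (m-1) - int m" using vB f1 f2 f3 f4 f5 o1 by linarith
    show ?thesis
    proof (cases "vn (m+1) < int m - FF m")
      case True
      have lt: "vq B < vq A" using vAo vBo True by simp
      from vq_add_lt[OF B0 A0 lt] have c0: "B + A \<noteq> 0" "vq (B + A) = vq B" by auto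
      have H3: "\<forall>j. odd j \<and> 0 < j \<and> j \<le> m-2 \<longrightarrow>
          vn ((m choose j) + ((m-2) choose j)) + FF j + FF (2*m-j-2) - 1 - FF (2*m-1) - vq (B + A) \<ge> 0"
      proof (intro allI impI)
        fix j assume j: "odd j \<and> 0 < j \<and> j \<le> m-2"
        have h: "(vn ((m choose j) + ((m-2) choose j)) \<ge> FF m - FF j - FF (m-j) \<or>
         vn ((m choose j) + ((m-2) choose j)) \<ge> FF (m-2) - FF j - FF (m-2-j))
        \<and> FF (m-j-1) + FF (m-1) \<le> FF (2*m-j-2)
        \<and> FF (m-2-j) + FF m \<le> FF (2*m-j-2)
        \<and> FF (m-j) + FF (m-2) \<le> FF (2*m-j-2)
        \<and> FF (m-j) = FF (m-j-1) + vn (m-j)" using H3gen j by blast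
        from h have d: "vn ((m choose j) + ((m-2) choose j)) \<ge> FF m - FF j - FF (m-j) \<or>
         vn ((m choose j) + ((m-2) choose j)) \<ge> FF (m-2) - FF j - FF (m-2-j)" by blast
        from h have s3: "FF (m-j) + FF (m-2) \<le> FF (2*m-j-2)" and s2: "FF (m-2-j) + FF m \<le> FF (2*m-j-2)"
          by blast+
        from d show "vn ((m choose j) + ((m-2) choose j)) + FF j + FF (2*m-j-2) - 1 - FF (2*m-1) - vq (B + A) \<ge> 0"
        proof
          assume a: "vn ((m choose j) + ((m-2) choose j)) \<ge> FF m - FF j - FF (m-j)"
          show ?thesis using a s3 c0(2) vBo f1 f2 f3 f4 f5 o1 by linarith
        next
          assume a: "vn ((m choose j) + ((m-2) choose j)) \<ge> FF (m-2) - FF j - FF (m-2-j)"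
          show ?thesis using a s2 c0(2) vBo f1 f2 f3 f4 f5 o1 by linarith
        qed
      qed
      have "vn (m-1) \<ge> 0" by simp
      thus ?thesis unfolding cc using c0 vBo flt H3 by simp
    next
      case False
      obtain e where e: "m + 1 = 2^e" "e \<ge> 2" using mersenne_detect[of m] m2 \<open>odd m\<close> False by auto
      have q: "m - 2 + 3 = 2^e" "2 * (m - 2 + 2) = 2 * m" using e m2 by simp_all
      have mc: "c_seq (2*m) \<noteq> 0 \<and> vq (c_seq (2*m)) \<le> - int e" using mersenne_c[OF q(1) e(2)] unfolding q(2) .
      have Fm: "FF m = int m - int e"
      proof -
        have "FF (m+1) = FF m + vn (m+1)" using FF_Suc[of m] by simp
        moreover have "vn (m+1) = int e" using e vn_pow2 by simp
        moreover have "FF (m+1) = 2^e - 1" using e FF_pow2 by simp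
        moreover have "int (m+1) = int (2^e)" using e(1) by (rule arg_cong)
        ultimately show ?thesis by simp
      qed
      have vm1: "vn (m-1) = 1"
      proof -
        define g where "g = e - 2"
        have g: "e = g + 2" using e(2) unfolding g_def by simp
        have x4: "m + 1 = 4 * 2^g" using e(1) g by (simp add: power_add)
        have x1: "(2::nat)^g \<ge> 1" by simp
        have gen: "\<And>x::nat. m + 1 = 4*x \<Longrightarrow> x \<ge> 1 \<Longrightarrow> m - 1 = 4*(x-1)+2" by presburger
        from gen[OF x4 x1] obtain w where "m - 1 = 4*w+2" by blast
        thus ?thesis using vn_2mod4[of w] by simp
      qed
      have H3: "\<forall>j. odd j \<and> 0 < j \<and> j \<le> m-2 \<longrightarrow>
          vn ((m choose j) + ((m-2) choose j)) + FF j + FF (2*m-j-2) - 1 - FF (2*m-1) - vq (c_seq (2*m)) \<ge> 0"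
      proof (intro allI impI)
        fix j assume j: "odd j \<and> 0 < j \<and> j \<le> m-2"
        have "vn ((m choose j) + ((m-2) choose j)) + FF j + FF (2*m-j-2) + 2 * int e \<ge> 2 * int m"
          using mersenne_H3[OF e(1) e(2)] j by blast
        thus "vn ((m choose j) + ((m-2) choose j)) + FF j + FF (2*m-j-2) - 1 - FF (2*m-1) - vq (c_seq (2*m)) \<ge> 0"
          using mc Fm f1 f2 f3 o1 by linarith
      qed
      show ?thesis using mc Fm vm1 H3 e(2) by simp
    qed
  qed
qed



lemma nu_ge: "x \<noteq> 0 \<Longrightarrow> vq x \<ge> r \<Longrightarrow> nu 2 x \<ge> ereal (of_int r)"
  by (simp add: nu_vq)

lemma FF_pred': "n \<ge> 1 \<Longrightarrow> n - 1 = p \<Longrightarrow> FF n = FF p + vn n"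
  using FF_pred by blast

theorem lemma3p2:
  fixes k :: nat
  assumes "even k" and "k \<ge> 4"
  shows "nu 2 (d_seq (k - 2) / (2 * c_seq k * d_seq k)) \<ge> 1
       \<and> nu 2 (of_nat k * (d_seq (k div 2))^2 / (2 * c_seq k * d_seq k)) \<ge> 0
       \<and> (\<forall>j::nat. odd j \<and> 0 < j \<and> j \<le> k div 2 - 2 \<longrightarrow>
            nu 2 ((of_nat (k div 2 choose j) + of_nat ((k div 2 - 2) choose j))
                  * d_seq (j + 1) * d_seq (k - j - 1) / (c_seq k * d_seq k)) \<ge> 0)"
proof -
  obtain m where k: "k = 2*m" using assms(1) by blast
  have m2: "m \<ge> 2" using assms(2) k by simp
  have km: "k div 2 = m" using k by simp
  define c where "c = c_seq k"
  have cf: "c \<noteq> 0 \<and> vq c \<le> - vn (m-1) - 1 \<and> vq c \<le> FF m - int m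
    \<and> (\<forall>j. odd j \<and> 0 < j \<and> j \<le> m-2 \<longrightarrow>
        vn ((m choose j) + ((m-2) choose j)) + FF j + FF (2*m-j-2) - 1 - FF (2*m-1) - vq c \<ge> 0)"
    unfolding c_def k using c_facts[OF m2] .
  have c0: "c \<noteq> 0" using cf by blast
  have cf1: "vq c \<le> - vn (m-1) - 1" using cf by blast
  have cf2: "vq c \<le> FF m - int m" using cf by blast
  have g1: "FF (2*m) = int m + FF m" by (rule FF_double)
  have g2: "FF (2*m) = FF (2*m-1) + vn (2*m)" using FF_pred[of "2*m"] m2 by simp
  have g3: "vn (2*m) = 1 + vn m" using m2 by (intro vn_double) simp
  have g4: "FF m = FF (m-1) + vn m" using FF_pred[of m] m2 by simp
  have g5: "FF (2*m-1) = FF (2*m-2) + vn (2*m-1)" by (rule FF_pred') (use m2 in simp_all)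
  have g6: "vn (2*m-1) = 0" using m2 by (intro vn_oddI) simp
  have g7: "FF (2*m-2) = FF (2*m-3) + vn (2*m-2)" by (rule FF_pred') (use m2 in simp_all)
  have g8: "vn (2*m-2) = 1 + vn (m-1)"
  proof -
    have "2*m-2 = 2*(m-1)" by simp
    thus ?thesis using vn_double[of "m-1"] m2 by simp
  qed
  have dk: "d_seq k \<noteq> 0" "vq (d_seq k) = FF (2*m-1) - int (2*m+1)" using vq_d[of k] k by simp_all
  have den0: "2 * c * d_seq k \<noteq> 0" using c0 dk by simp
  have vden: "vq (2 * c * d_seq k) = 1 + vq c + vq (d_seq k)"
    using vq_mult3[of 2 c "d_seq k"] c0 dk vq_two by simp
  have P1: "nu 2 (d_seq (k - 2) / (2 * c * d_seq k)) \<ge> 1"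
  proof -
    have d2: "d_seq (k-2) \<noteq> 0" "vq (d_seq (k-2)) = FF (2*m-3) - int (2*m-1)"
      using vq_d[of "k-2"] k m2 by (simp_all add: diff_diff_add)
    have nz: "d_seq (k - 2) / (2 * c * d_seq k) \<noteq> 0" using d2 den0 by simp
    have "vq (d_seq (k - 2) / (2 * c * d_seq k)) = vq (d_seq (k-2)) - vq (2 * c * d_seq k)"
      using d2(1) den0 by (rule vq_divide)
    moreover have "int (2*m-1) = 2 * int m - 1" "int (2*m+1) = 2 * int m + 1" using m2 by simp_all
    ultimately have "vq (d_seq (k - 2) / (2 * c * d_seq k)) \<ge> 1"
      using d2 vden dk cf g5 g6 g7 g8 by linarith
    hence "nu 2 (d_seq (k - 2) / (2 * c * d_seq k)) \<ge> ereal (of_int 1)" using nz by (rule_tac nu_ge) 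
    thus ?thesis by (simp add: one_ereal_def)
  qed
  have P2: "nu 2 (of_nat k * (d_seq (k div 2))^2 / (2 * c * d_seq k)) \<ge> 0"
  proof -
    have dm: "d_seq m \<noteq> 0" "vq (d_seq m) = FF (m-1) - int (m+1)" using vq_d[of m] by simp_all
    have kq: "(of_nat k :: rat) \<noteq> 0" "vq (of_nat k) = 1 + vn m" using k m2 g3 vq_of_nat[of k] by simp_all
    have num0: "of_nat k * (d_seq m)^2 \<noteq> 0" using dm kq by simp
    have vnum: "vq (of_nat k * (d_seq m)^2) = 1 + vn m + 2 * (FF (m-1) - int (m+1))"
    proof -
      have "vq (of_nat k * (d_seq m)^2) = vq (of_nat k * d_seq m * d_seq m)" by (simp add: power2_eq_square mult.assoc)
      also have "\<dots> = vq (of_nat k) + vq (d_seq m) + vq (d_seq m)" using kq dm by (intro vq_mult3) auto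
      finally show ?thesis using kq dm by simp
    qed
    have nz: "of_nat k * (d_seq m)^2 / (2 * c * d_seq k) \<noteq> 0" using num0 den0 by simp
    have "vq (of_nat k * (d_seq m)^2 / (2 * c * d_seq k)) = vq (of_nat k * (d_seq m)^2) - vq (2 * c * d_seq k)"
      using num0 den0 by (rule vq_divide)
    moreover have "int (2*m-1) = 2 * int m - 1" "int (2*m+1) = 2 * int m + 1" using m2 by simp_all
    ultimately have "vq (of_nat k * (d_seq m)^2 / (2 * c * d_seq k)) \<ge> 0"
      using vnum vden dk cf2 g1 g2 g3 g4 by simp
    hence "nu 2 (of_nat k * (d_seq m)^2 / (2 * c * d_seq k)) \<ge> ereal (of_int 0)" using nz by (rule_tac nu_ge)
    thus ?thesis unfolding km by (simp add: zero_ereal_def)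
  qed
  have P3: "\<forall>j::nat. odd j \<and> 0 < j \<and> j \<le> k div 2 - 2 \<longrightarrow>
            nu 2 ((of_nat (k div 2 choose j) + of_nat ((k div 2 - 2) choose j))
                  * d_seq (j + 1) * d_seq (k - j - 1) / (c * d_seq k)) \<ge> 0"
  proof (intro allI impI)
    fix j assume j: "odd j \<and> 0 < j \<and> j \<le> k div 2 - 2"
    hence j': "odd j" "0 < j" "j \<le> m - 2" using km by auto
    define S where "S = (m choose j) + ((m-2) choose j)"
    have Spos: "S > 0" unfolding S_def using j' by simp
    have Sq: "(of_nat (k div 2 choose j) + of_nat ((k div 2 - 2) choose j) :: rat) = of_nat S"
      unfolding S_def km by simp
    have vS: "vq (of_nat S) = vn S" using Spos by (rule vq_of_nat)
    have S0: "(of_nat S :: rat) \<noteq> 0" using Spos by simp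
    have d1: "d_seq (j+1) \<noteq> 0" "vq (d_seq (j+1)) = FF j - int (j+2)" using vq_d[of "j+1"] by simp_all
    have e1: "k - j - 1 - 1 = 2*m-j-2" "k - j - 1 + 1 = 2*m - j" using k j' m2 by simp_all
    have d2: "d_seq (k-j-1) \<noteq> 0" "vq (d_seq (k-j-1)) = FF (2*m-j-2) - int (2*m-j)"
      using vq_d[of "k-j-1"] unfolding e1 by simp_all
    have num0: "of_nat S * d_seq (j+1) * d_seq (k-j-1) \<noteq> 0" using S0 d1 d2 by simp
    have vnum: "vq (of_nat S * d_seq (j+1) * d_seq (k-j-1)) = vn S + (FF j - int (j+2)) + (FF (2*m-j-2) - int (2*m-j))"
      using vq_mult3[OF S0 d1(1) d2(1)] vS d1 d2 by simp
    have den1: "c * d_seq k \<noteq> 0" using c0 dk by simp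
    have vden1: "vq (c * d_seq k) = vq c + vq (d_seq k)" using c0 dk by (intro vq_mult) auto
    have nz: "of_nat S * d_seq (j+1) * d_seq (k-j-1) / (c * d_seq k) \<noteq> 0" using num0 den1 by simp
    have "vq (of_nat S * d_seq (j+1) * d_seq (k-j-1) / (c * d_seq k)) =
          vq (of_nat S * d_seq (j+1) * d_seq (k-j-1)) - vq (c * d_seq k)"
      using num0 den1 by (rule vq_divide)
    moreover have "int (2*m-1) = 2 * int m - 1" "int (2*m+1) = 2 * int m + 1" "int (2*m-j) = 2 * int m - int j"
      using m2 j' by simp_all
    moreover have "vn S + FF j + FF (2*m-j-2) - 1 - FF (2*m-1) - vq c \<ge> 0" using cf j' unfolding S_def by blast
    ultimately have "vq (of_nat S * d_seq (j+1) * d_seq (k-j-1) / (c * d_seq k)) \<ge> 0"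
      using vnum vden1 dk by linarith
    hence "nu 2 (of_nat S * d_seq (j+1) * d_seq (k-j-1) / (c * d_seq k)) \<ge> ereal (of_int 0)" using nz by (rule_tac nu_ge)
    thus "nu 2 ((of_nat (k div 2 choose j) + of_nat ((k div 2 - 2) choose j))
                  * d_seq (j + 1) * d_seq (k - j - 1) / (c * d_seq k)) \<ge> 0" unfolding Sq by (simp add: zero_ereal_def)
  qed
  show ?thesis using P1 P2 P3 unfolding c_def by blast
qed


end
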